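(* If $(\alpha,\beta)$ is admissible and non-null, then there exists $x\in(0,1)$ such that $\pi_x(\alpha)=\pi_x(\beta)$.
   Context: $\Omega=\{0,1\}^\infty$ (infinite binary strings $\omega_0\omega_1\cdots$), $S$ the left shift, $\preceq$ the lexicographic order with intervals $[\alpha,\beta]=\{\omega:\alpha\preceq\omega\preceq\beta\}$ and half-open analogues. $(\alpha,\beta)$ is admissible if $\alpha_0=0,\alpha_1=1,\beta_0=1,\beta_1=0$ and $S^n\alpha\notin(\alpha,\beta]$, $S^n\beta\notin[\alpha,\beta)$ for all $n\ge0$. $\Omega_{(\alpha,\beta,-)}=\{\omega:S^n\omega\notin(\alpha,\beta]\ \forall n\ge0\}$, $\Omega_{(\alpha,\beta,+)}=\{\omega:S^n\omega\notin[\alpha,\beta)\ \forall n\ge0\}$, $\Omega_{(\alpha,\beta)}$ their union. With $\Gamma_n=\{\omega_0\cdots\omega_n:\omega\in\Gamma\}$ and $h(\Gamma)=\limsup_n\frac1n\ln|\Gamma_n|$, the admissible pair is non-null if $h(\Omega_{(\alpha,\beta)})>0$. Projection: $\pi_x(\omega)=(1-x)\sum_{k\ge0}\omega_kx^k$ for $x\in[0,1)$. *)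

theory Defs
  imports "HOL-Analysis.Analysis" "HOL-Library.Liminf_Limsup"
begin

definition Omega :: "(nat \<Rightarrow> nat) set" where
  "Omega = {\<omega>. \<forall>k. \<omega> k \<in> {0, 1}}"

definition shift :: "(nat \<Rightarrow> nat) \<Rightarrow> (nat \<Rightarrow> nat)" where
  "shift \<omega> = (\<lambda>k. \<omega> (Suc k))"

definition lex_less :: "(nat \<Rightarrow> nat) \<Rightarrow> (nat \<Rightarrow> nat) \<Rightarrow> bool" where
  "lex_less \<omega> \<eta> = (\<exists>n. (\<forall>k<n. \<omega> k = \<eta> k) \<and> \<omega> n < \<eta> n)"

definition lex_le :: "(nat \<Rightarrow> nat) \<Rightarrow> (nat \<Rightarrow> nat) \<Rightarrow> bool" where
  "lex_le \<omega> \<eta> = (lex_less \<omega> \<eta> \<or> \<omega> = \<eta>)"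

definition admissible :: "(nat \<Rightarrow> nat) \<Rightarrow> (nat \<Rightarrow> nat) \<Rightarrow> bool" where
  "admissible \<alpha> \<beta> =
     (\<alpha> \<in> Omega \<and> \<beta> \<in> Omega \<and>
      \<alpha> 0 = 0 \<and> \<alpha> 1 = 1 \<and> \<beta> 0 = 1 \<and> \<beta> 1 = 0 \<and>
      (\<forall>n. \<not> (lex_less \<alpha> ((shift ^^ n) \<alpha>) \<and> lex_le ((shift ^^ n) \<alpha>) \<beta>)) \<and>
      (\<forall>n. \<not> (lex_le \<alpha> ((shift ^^ n) \<beta>) \<and> lex_less ((shift ^^ n) \<beta>) \<beta>)))"

definition Omega_minus :: "(nat \<Rightarrow> nat) \<Rightarrow> (nat \<Rightarrow> nat) \<Rightarrow> (nat \<Rightarrow> nat) set" where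
  "Omega_minus \<alpha> \<beta> = {\<omega> \<in> Omega. \<forall>n.
      \<not> (lex_less \<alpha> ((shift ^^ n) \<omega>) \<and> lex_le ((shift ^^ n) \<omega>) \<beta>)}"

definition Omega_plus :: "(nat \<Rightarrow> nat) \<Rightarrow> (nat \<Rightarrow> nat) \<Rightarrow> (nat \<Rightarrow> nat) set" where
  "Omega_plus \<alpha> \<beta> = {\<omega> \<in> Omega. \<forall>n.
      \<not> (lex_le \<alpha> ((shift ^^ n) \<omega>) \<and> lex_less ((shift ^^ n) \<omega>) \<beta>)}"

definition Omega_ab :: "(nat \<Rightarrow> nat) \<Rightarrow> (nat \<Rightarrow> nat) \<Rightarrow> (nat \<Rightarrow> nat) set" where
  "Omega_ab \<alpha> \<beta> = Omega_minus \<alpha> \<beta> \<union> Omega_plus \<alpha> \<beta>"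

definition prefixes :: "(nat \<Rightarrow> nat) set \<Rightarrow> nat \<Rightarrow> nat list set" where
  "prefixes \<Gamma> n = (\<lambda>\<omega>. map \<omega> [0..<Suc n]) ` \<Gamma>"

definition entropy :: "(nat \<Rightarrow> nat) set \<Rightarrow> ereal" where
  "entropy \<Gamma> = limsup (\<lambda>n. ereal (ln (real (card (prefixes \<Gamma> n))) / real n))"

definition non_null :: "(nat \<Rightarrow> nat) \<Rightarrow> (nat \<Rightarrow> nat) \<Rightarrow> bool" where
  "non_null \<alpha> \<beta> = (entropy (Omega_ab \<alpha> \<beta>) > 0)"

definition proj :: "real \<Rightarrow> (nat \<Rightarrow> nat) \<Rightarrow> real" where
  "proj x \<omega> = (1 - x) * (\<Sum>k. real (\<omega> k) * x ^ k)"

end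

theory Submission
  imports Defs
begin


lemma shift_pow: "(shift ^^ n) \<omega> k = \<omega> (k + n)"
  by (induction n arbitrary: k) (auto simp: shift_def)

lemma shift_pow_add: "(shift ^^ m) ((shift ^^ n) \<omega>) = (shift ^^ (m + n)) \<omega>"
  by (simp add: funpow_add)

lemma Omega_shift: "\<omega> \<in> Omega \<Longrightarrow> (shift ^^ n) \<omega> \<in> Omega"
  by (simp add: Omega_def shift_pow)

lemma lex_total: assumes "\<omega> \<noteq> \<eta>" shows "lex_less \<omega> \<eta> \<or> lex_less \<eta> \<omega>"
proof -
  have ex: "\<exists>k. \<omega> k \<noteq> \<eta> k" using assms by auto
  define m where "m = (LEAST k. \<omega> k \<noteq> \<eta> k)"
  have m1: "\<omega> m \<noteq> \<eta> m" unfolding m_def using LeastI_ex[OF ex] .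
  have m2: "\<forall>k<m. \<omega> k = \<eta> k" unfolding m_def using not_less_Least by blast
  show ?thesis
  proof (cases "\<omega> m < \<eta> m")
    case True then show ?thesis using m2 unfolding lex_less_def by blast
  next
    case False then have "\<eta> m < \<omega> m" using m1 by simp
    then show ?thesis using m2 unfolding lex_less_def by (metis)
  qed
qed

lemma lex_asym: assumes "lex_less a b" "lex_le b a" shows False
proof -
  obtain n where n: "\<forall>k<n. a k = b k" "a n < b n" using assms(1) unfolding lex_less_def by blast
  show False
  proof (cases "b = a")
    case True then show ?thesis using n by simp
  next
    case False
    then obtain m where m: "\<forall>k<m. b k = a k" "b m < a m" using assms(2) unfolding lex_le_def lex_less_def by blast
    show False
      using n m by (metis less_asym linorder_neqE_nat)
  qed
qed

lemma not_less_le: "\<not> lex_less a b \<Longrightarrow> lex_le b a"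
  using lex_total unfolding lex_le_def by blast

lemma not_le_less: "\<not> lex_le a b \<Longrightarrow> lex_less b a"
  using lex_total unfolding lex_le_def by blast

lemma start_less: "a 0 < b 0 \<Longrightarrow> lex_less a b"
  unfolding lex_less_def by (rule exI[of _ 0]) simp

lemma less_le: "lex_less a b \<Longrightarrow> lex_le a b"
  unfolding lex_le_def by simp

definition Yset :: "(nat \<Rightarrow> nat) \<Rightarrow> (nat \<Rightarrow> nat) \<Rightarrow> (nat \<Rightarrow> nat) set" where
  "Yset \<alpha> \<beta> = {\<omega> \<in> Omega. \<forall>n. ((shift ^^ n) \<omega> 0 = 0 \<longrightarrow> lex_le ((shift ^^ n) \<omega>) \<alpha>)
       \<and> ((shift ^^ n) \<omega> 0 = 1 \<longrightarrow> lex_le \<beta> ((shift ^^ n) \<omega>))}"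

lemma Yset_shift: "\<omega> \<in> Yset \<alpha> \<beta> \<Longrightarrow> (shift ^^ n) \<omega> \<in> Yset \<alpha> \<beta>"
  unfolding Yset_def using Omega_shift by (auto simp: shift_pow_add)

lemma minus_Y:
  assumes "\<omega> \<in> Omega_minus \<alpha> \<beta>" "\<alpha> 0 = 0" "\<beta> 0 = 1"
  shows "\<omega> \<in> Yset \<alpha> \<beta>"
proof -
  have om: "\<omega> \<in> Omega" using assms unfolding Omega_minus_def by auto
  { fix n
    let ?z = "(shift ^^ n) \<omega>"
    have c: "\<not> (lex_less \<alpha> ?z \<and> lex_le ?z \<beta>)" using assms unfolding Omega_minus_def by auto
    have "(?z 0 = 0 \<longrightarrow> lex_le ?z \<alpha>) \<and> (?z 0 = 1 \<longrightarrow> lex_le \<beta> ?z)"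
    proof (intro conjI impI)
      assume "?z 0 = 0"
      then have "lex_less ?z \<beta>" using assms by (intro start_less) simp
      then show "lex_le ?z \<alpha>" using c less_le not_less_le by blast
    next
      assume "?z 0 = 1"
      then have "lex_less \<alpha> ?z" using assms by (intro start_less) simp
      then show "lex_le \<beta> ?z" using c less_le not_le_less by blast
    qed }
  then show ?thesis using om unfolding Yset_def by auto
qed

lemma plus_Y:
  assumes "\<omega> \<in> Omega_plus \<alpha> \<beta>" "\<alpha> 0 = 0" "\<beta> 0 = 1"
  shows "\<omega> \<in> Yset \<alpha> \<beta>"
proof -
  have om: "\<omega> \<in> Omega" using assms unfolding Omega_plus_def by auto
  { fix n
    let ?z = "(shift ^^ n) \<omega>"
    have c: "\<not> (lex_le \<alpha> ?z \<and> lex_less ?z \<beta>)" using assms unfolding Omega_plus_def by auto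
    have "(?z 0 = 0 \<longrightarrow> lex_le ?z \<alpha>) \<and> (?z 0 = 1 \<longrightarrow> lex_le \<beta> ?z)"
    proof (intro conjI impI)
      assume "?z 0 = 0"
      then have "lex_less ?z \<beta>" using assms by (intro start_less) simp
      then show "lex_le ?z \<alpha>" using c less_le not_le_less by blast
    next
      assume "?z 0 = 1"
      then have "lex_less \<alpha> ?z" using assms by (intro start_less) simp
      then show "lex_le \<beta> ?z" using c less_le not_less_le by blast
    qed }
  then show ?thesis using om unfolding Yset_def by auto
qed

lemma ab_Y:
  assumes "admissible \<alpha> \<beta>"
  shows "\<alpha> \<in> Yset \<alpha> \<beta>" "\<beta> \<in> Yset \<alpha> \<beta>" "Omega_ab \<alpha> \<beta> \<subseteq> Yset \<alpha> \<beta>"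
proof -
  have a: "\<alpha> 0 = 0" "\<beta> 0 = 1" using assms unfolding admissible_def by auto
  have "\<alpha> \<in> Omega_minus \<alpha> \<beta>" using assms unfolding admissible_def Omega_minus_def by auto
  then show "\<alpha> \<in> Yset \<alpha> \<beta>" using minus_Y a by blast
  have "\<beta> \<in> Omega_plus \<alpha> \<beta>" using assms unfolding admissible_def Omega_plus_def by auto
  then show "\<beta> \<in> Yset \<alpha> \<beta>" using plus_Y a by blast
  show "Omega_ab \<alpha> \<beta> \<subseteq> Yset \<alpha> \<beta>" unfolding Omega_ab_def using minus_Y plus_Y a by blast
qed



lemma om_le1: "\<zeta> \<in> Omega \<Longrightarrow> real (\<zeta> k) \<le> 1"
proof -
  assume "\<zeta> \<in> Omega"
  then have "\<zeta> k = 0 \<or> \<zeta> k = 1" unfolding Omega_def by auto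
  then show ?thesis by auto
qed

lemma summ: assumes "\<zeta> \<in> Omega" "0 \<le> x" "x < 1"
  shows "summable (\<lambda>k. real (\<zeta> k) * x ^ k)"
proof (rule summable_comparison_test[where g="\<lambda>k. x ^ k"])
  show "\<exists>N. \<forall>n\<ge>N. norm (real (\<zeta> n) * x ^ n) \<le> x ^ n"
    using om_le1[OF assms(1)] assms(2) by (auto intro!: exI[of _ 0] mult_left_le_one_le)
  show "summable (\<lambda>k. x ^ k)" using assms by (intro summable_geometric) simp
qed

lemma F_bounds: assumes "\<zeta> \<in> Omega" "0 \<le> x" "x < 1"
  shows "0 \<le> (\<Sum>k. real (\<zeta> k) * x ^ k)" "(\<Sum>k. real (\<zeta> k) * x ^ k) \<le> 1 / (1 - x)"
proof -
  show "0 \<le> (\<Sum>k. real (\<zeta> k) * x ^ k)"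
    using summ[OF assms] assms by (intro suminf_nonneg) auto
  have "(\<Sum>k. real (\<zeta> k) * x ^ k) \<le> (\<Sum>k. x ^ k)"
    using summ[OF assms] assms om_le1[OF assms(1)]
    by (intro suminf_le) (auto intro!: mult_left_le_one_le summable_geometric)
  also have "\<dots> = 1 / (1 - x)" using assms by (intro suminf_geometric) simp
  finally show "(\<Sum>k. real (\<zeta> k) * x ^ k) \<le> 1 / (1 - x)" .
qed

lemma proj_bounds: assumes "\<zeta> \<in> Omega" "0 \<le> x" "x < 1"
  shows "0 \<le> proj x \<zeta>" "proj x \<zeta> \<le> 1"
proof -
  note F = F_bounds[OF assms]
  show "0 \<le> proj x \<zeta>" unfolding proj_def using F assms by simp
  have "proj x \<zeta> \<le> (1 - x) * (1 / (1 - x))" unfolding proj_def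
    using F assms by (intro mult_left_mono) auto
  then show "proj x \<zeta> \<le> 1" using assms by simp
qed

lemma proj_split: assumes "\<zeta> \<in> Omega" "0 \<le> x" "x < 1"
  shows "proj x \<zeta> = (1 - x) * (\<Sum>k<n. real (\<zeta> k) * x ^ k) + x ^ n * proj x ((shift ^^ n) \<zeta>)"
proof -
  have s: "summable (\<lambda>k. real (\<zeta> k) * x ^ k)" using summ[OF assms] .
  have s2: "summable (\<lambda>k. real (\<zeta> (k + n)) * x ^ k)"
    using summ[OF Omega_shift[OF assms(1)] assms(2,3), of n] by (simp add: shift_pow)
  have "(\<Sum>k. real (\<zeta> k) * x ^ k) = (\<Sum>k. real (\<zeta> (k + n)) * x ^ (k + n)) + (\<Sum>k<n. real (\<zeta> k) * x ^ k)"
    using suminf_split_initial_segment[OF s, of n] by simp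
  also have "(\<Sum>k. real (\<zeta> (k + n)) * x ^ (k + n)) = (\<Sum>k. x ^ n * (real (\<zeta> (k + n)) * x ^ k))"
    by (simp add: power_add mult_ac)
  also have "\<dots> = x ^ n * (\<Sum>k. real (\<zeta> (k + n)) * x ^ k)"
    using s2 by (rule suminf_mult)
  finally show ?thesis unfolding proj_def by (simp add: shift_pow algebra_simps)
qed

lemma proj_diff: assumes "\<omega> \<in> Omega" "\<eta> \<in> Omega" "0 \<le> x" "x < 1" "\<forall>k<n. \<omega> k = \<eta> k"
  shows "proj x \<eta> - proj x \<omega> = x ^ n * (proj x ((shift ^^ n) \<eta>) - proj x ((shift ^^ n) \<omega>))"
proof -
  have "(\<Sum>k<n. real (\<omega> k) * x ^ k) = (\<Sum>k<n. real (\<eta> k) * x ^ k)"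
    using assms(5) by (intro sum.cong) auto
  then show ?thesis
    using proj_split[OF assms(1,3,4), of n] proj_split[OF assms(2,3,4), of n]
    by (simp add: algebra_simps)
qed

lemma F_lip: assumes "\<zeta> \<in> Omega" "0 \<le> x" "x \<le> y" "y < 1"
  shows "0 \<le> (\<Sum>k. real (\<zeta> k) * y ^ k) - (\<Sum>k. real (\<zeta> k) * x ^ k)"
        "(\<Sum>k. real (\<zeta> k) * y ^ k) - (\<Sum>k. real (\<zeta> k) * x ^ k) \<le> 1 / (1 - y) - 1 / (1 - x)"
proof -
  have x1: "x < 1" using assms by simp
  have y0: "0 \<le> y" using assms by simp
  have sy: "summable (\<lambda>k. real (\<zeta> k) * y ^ k)" using summ[OF assms(1) y0 assms(4)] .
  have sx: "summable (\<lambda>k. real (\<zeta> k) * x ^ k)" using summ[OF assms(1,2) x1] .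
  have gy: "summable (\<lambda>k. y ^ k)" using assms by (intro summable_geometric) simp
  have gx: "summable (\<lambda>k. x ^ k)" using assms by (intro summable_geometric) simp
  have eq: "(\<Sum>k. real (\<zeta> k) * y ^ k) - (\<Sum>k. real (\<zeta> k) * x ^ k) = (\<Sum>k. real (\<zeta> k) * (y ^ k - x ^ k))"
    using suminf_diff[OF sy sx] by (simp add: algebra_simps)
  have sd: "summable (\<lambda>k. real (\<zeta> k) * (y ^ k - x ^ k))"
    using summable_diff[OF sy sx] by (simp add: algebra_simps)
  have mono: "x ^ k \<le> y ^ k" for k using assms by (intro power_mono) auto
  show "0 \<le> (\<Sum>k. real (\<zeta> k) * y ^ k) - (\<Sum>k. real (\<zeta> k) * x ^ k)"
    unfolding eq using sd mono by (intro suminf_nonneg) auto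
  have "(\<Sum>k. real (\<zeta> k) * (y ^ k - x ^ k)) \<le> (\<Sum>k. y ^ k - x ^ k)"
    using sd summable_diff[OF gy gx] mono om_le1[OF assms(1)]
    by (intro suminf_le) (auto intro!: mult_left_le_one_le)
  also have "\<dots> = (\<Sum>k. y ^ k) - (\<Sum>k. x ^ k)" using suminf_diff[OF gy gx] by simp
  also have "\<dots> = 1 / (1 - y) - 1 / (1 - x)"
    using assms by (simp add: suminf_geometric)
  finally show "(\<Sum>k. real (\<zeta> k) * y ^ k) - (\<Sum>k. real (\<zeta> k) * x ^ k) \<le> 1 / (1 - y) - 1 / (1 - x)"
    unfolding eq .
qed

lemma proj_lip_aux: assumes "\<zeta> \<in> Omega" "0 \<le> x" "x \<le> y" "y < 1"
  shows "\<bar>proj y \<zeta> - proj x \<zeta>\<bar> \<le> 2 * (y - x) / (1 - y)"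
proof -
  define Fy where "Fy = (\<Sum>k. real (\<zeta> k) * y ^ k)"
  define Fx where "Fx = (\<Sum>k. real (\<zeta> k) * x ^ k)"
  have x1: "x < 1" using assms by simp
  have l: "0 \<le> Fy - Fx" "Fy - Fx \<le> 1 / (1 - y) - 1 / (1 - x)"
    using F_lip[OF assms] unfolding Fy_def Fx_def by auto
  have b: "0 \<le> Fx" "Fx \<le> 1 / (1 - x)" using F_bounds[OF assms(1,2) x1] unfolding Fx_def by auto
  have nz: "1 - x \<noteq> 0" "1 - y \<noteq> 0" using assms by auto
  have e1: "1 / (1 - y) - 1 / (1 - x) = (y - x) / ((1 - x) * (1 - y))"
    using nz by (simp add: field_simps)
  have eq: "proj y \<zeta> - proj x \<zeta> = (1 - y) * (Fy - Fx) - (y - x) * Fx"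
    unfolding proj_def Fy_def Fx_def by (simp add: algebra_simps)
  have t1: "0 \<le> (1 - y) * (Fy - Fx)" using l assms by simp
  have t1': "(1 - y) * (Fy - Fx) \<le> (y - x) / (1 - x)"
  proof -
    have "(1 - y) * (Fy - Fx) \<le> (1 - y) * ((y - x) / ((1 - x) * (1 - y)))"
      using l e1 assms by (intro mult_left_mono) auto
    also have "\<dots> = (y - x) / (1 - x)" using nz by simp
    finally show ?thesis .
  qed
  have t2: "0 \<le> (y - x) * Fx" using b assms by simp
  have t2': "(y - x) * Fx \<le> (y - x) / (1 - x)"
    using mult_left_mono[OF b(2), of "y - x"] assms by simp
  have "(y - x) / (1 - x) \<le> (y - x) / (1 - y)"
    using assms by (intro divide_left_mono) auto
  moreover have "0 \<le> (y - x) / (1 - y)" using assms by simp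
  moreover have "2 * (y - x) / (1 - y) = 2 * ((y - x) / (1 - y))" by simp
  ultimately show ?thesis unfolding eq using t1 t1' t2 t2' by (simp only: abs_le_iff) linarith
qed

lemma proj_lip: assumes "\<zeta> \<in> Omega" "0 \<le> x" "0 \<le> y" "x \<le> r" "y \<le> r" "r < 1"
  shows "\<bar>proj y \<zeta> - proj x \<zeta>\<bar> \<le> 2 * \<bar>y - x\<bar> / (1 - r)"
proof (cases "x \<le> y")
  case True
  have "\<bar>proj y \<zeta> - proj x \<zeta>\<bar> \<le> 2 * (y - x) / (1 - y)" using proj_lip_aux[OF assms(1,2) True] assms by simp
  also have "\<dots> \<le> 2 * (y - x) / (1 - r)" using assms True by (intro divide_left_mono) auto
  finally show ?thesis using True by simp
next
  case False
  have "\<bar>proj x \<zeta> - proj y \<zeta>\<bar> \<le> 2 * (x - y) / (1 - x)" using proj_lip_aux[OF assms(1,3)] False assms by simp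
  also have "\<dots> \<le> 2 * (x - y) / (1 - r)" using assms False by (intro divide_left_mono) auto
  finally show ?thesis using False by (simp add: abs_minus_commute)
qed



definition Mono :: "(nat \<Rightarrow> nat) \<Rightarrow> (nat \<Rightarrow> nat) \<Rightarrow> real \<Rightarrow> bool" where
  "Mono \<alpha> \<beta> x = (\<forall>\<omega>\<in>Yset \<alpha> \<beta>. \<forall>\<eta>\<in>Yset \<alpha> \<beta>. lex_less \<omega> \<eta> \<longrightarrow> proj x \<omega> \<le> proj x \<eta>)"

lemma Y_Omega: "\<omega> \<in> Yset \<alpha> \<beta> \<Longrightarrow> \<omega> \<in> Omega" unfolding Yset_def by auto

lemma first_diff: assumes "\<omega> \<in> Omega" "\<eta> \<in> Omega" "lex_less \<omega> \<eta>"
  shows "\<exists>n. (\<forall>k<n. \<omega> k = \<eta> k) \<and> \<omega> n = 0 \<and> \<eta> n = 1"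
proof -
  obtain n where n: "\<forall>k<n. \<omega> k = \<eta> k" "\<omega> n < \<eta> n" using assms(3) unfolding lex_less_def by blast
  have "\<omega> n \<in> {0,1}" "\<eta> n \<in> {0,1}" using assms unfolding Omega_def by auto
  then show ?thesis using n by auto
qed

lemma Y0: "\<omega> \<in> Yset \<alpha> \<beta> \<Longrightarrow> \<omega> n = 0 \<Longrightarrow> lex_le ((shift ^^ n) \<omega>) \<alpha>"
  unfolding Yset_def by (auto simp: shift_pow)

lemma Y1: "\<omega> \<in> Yset \<alpha> \<beta> \<Longrightarrow> \<omega> n = 1 \<Longrightarrow> lex_le \<beta> ((shift ^^ n) \<omega>)"
  unfolding Yset_def by (auto simp: shift_pow)

lemma mono_le: "Mono \<alpha> \<beta> x \<Longrightarrow> a \<in> Yset \<alpha> \<beta> \<Longrightarrow> b \<in> Yset \<alpha> \<beta> \<Longrightarrow> lex_le a b \<Longrightarrow> proj x a \<le> proj x b"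
  unfolding Mono_def lex_le_def by auto

lemma inner_gap:
  assumes "admissible \<alpha> \<beta>" "Mono \<alpha> \<beta> x" "\<omega> \<in> Yset \<alpha> \<beta>" "\<eta> \<in> Yset \<alpha> \<beta>" "\<omega> n = 0" "\<eta> n = 1"
  shows "proj x \<beta> - proj x \<alpha> \<le> proj x ((shift ^^ n) \<eta>) - proj x ((shift ^^ n) \<omega>)"
proof -
  note ab = ab_Y[OF assms(1)]
  have "proj x ((shift ^^ n) \<omega>) \<le> proj x \<alpha>"
    using mono_le[OF assms(2) Yset_shift[OF assms(3)] ab(1) Y0[OF assms(3,5)]] .
  moreover have "proj x \<beta> \<le> proj x ((shift ^^ n) \<eta>)"
    using mono_le[OF assms(2) ab(2) Yset_shift[OF assms(4)] Y1[OF assms(4,6)]] .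
  ultimately show ?thesis by simp
qed

lemma gap:
  assumes "admissible \<alpha> \<beta>" "Mono \<alpha> \<beta> x" "0 \<le> x" "x < 1" "\<omega> \<in> Yset \<alpha> \<beta>" "\<eta> \<in> Yset \<alpha> \<beta>"
     "\<forall>k<n. \<omega> k = \<eta> k" "\<omega> n = 0" "\<eta> n = 1"
  shows "x ^ n * (proj x \<beta> - proj x \<alpha>) \<le> proj x \<eta> - proj x \<omega>"
  unfolding proj_diff[OF Y_Omega[OF assms(5)] Y_Omega[OF assms(6)] assms(3,4,7)]
  using inner_gap[OF assms(1,2,5,6,8,9)] assms(3) by (intro mult_left_mono) auto

lemma proj_step: "\<zeta> \<in> Omega \<Longrightarrow> 0 \<le> x \<Longrightarrow> x < 1 \<Longrightarrow> proj x \<zeta> = (1 - x) * real (\<zeta> 0) + x * proj x (shift \<zeta>)"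
  using proj_split[of \<zeta> x 1] by simp

lemma mono_third: "Mono \<alpha> \<beta> (1/3)"
  unfolding Mono_def
proof (intro ballI impI)
  fix \<omega> \<eta> assume w: "\<omega> \<in> Yset \<alpha> \<beta>" and e: "\<eta> \<in> Yset \<alpha> \<beta>" and l: "lex_less \<omega> \<eta>"
  have wo: "\<omega> \<in> Omega" and eo: "\<eta> \<in> Omega" using w e Y_Omega by auto
  obtain n where n: "\<forall>k<n. \<omega> k = \<eta> k" "\<omega> n = 0" "\<eta> n = 1" using first_diff[OF wo eo l] by blast
  define w' where "w' = (shift ^^ n) \<omega>"
  define e' where "e' = (shift ^^ n) \<eta>"
  have w'o: "w' \<in> Omega" and e'o: "e' \<in> Omega" unfolding w'_def e'_def using Omega_shift wo eo by auto
  have w0: "w' 0 = 0" and e0: "e' 0 = 1" unfolding w'_def e'_def using n by (auto simp: shift_pow)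
  have sw: "shift w' \<in> Omega" "shift e' \<in> Omega"
    using Omega_shift[OF w'o, of 1] Omega_shift[OF e'o, of 1] by auto
  have b1: "0 \<le> proj (1/3) (shift e')" using proj_bounds(1)[OF sw(2)] by simp
  have b2: "proj (1/3) (shift w') \<le> 1" using proj_bounds(2)[OF sw(1)] by simp
  have "proj (1/3) e' - proj (1/3) w' = 2/3 + (1/3) * (proj (1/3) (shift e') - proj (1/3) (shift w'))"
    using proj_step[OF e'o, of "1/3"] proj_step[OF w'o, of "1/3"] w0 e0 by (simp add: algebra_simps)
  moreover have "\<And>a b c d::real. a - b = 2/3 + 1/3*(c - d) \<Longrightarrow> 0 \<le> c \<Longrightarrow> d \<le> 1 \<Longrightarrow> 0 \<le> a - b"
    by (simp add: field_simps)
  ultimately have "0 \<le> proj (1/3) e' - proj (1/3) w'" using b1 b2 by blast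
  then have m: "0 \<le> (1/3::real) ^ n * (proj (1/3) e' - proj (1/3) w')" by simp
  have d: "proj (1/3) \<eta> - proj (1/3) \<omega> = (1/3::real) ^ n * (proj (1/3) e' - proj (1/3) w')"
    unfolding w'_def e'_def using proj_diff[OF wo eo _ _ n(1), of "1/3"] by simp
  show "proj (1/3) \<omega> \<le> proj (1/3) \<eta>" using m d by linarith
qed

lemma open_mono:
  assumes adm: "admissible \<alpha> \<beta>" and x: "0 < x" "x < 1" and M: "Mono \<alpha> \<beta> x"
    and ne: "proj x \<alpha> \<noteq> proj x \<beta>"
  shows "\<exists>e>0. \<forall>y. dist y x < e \<longrightarrow> y \<in> {0<..<1} \<longrightarrow> Mono \<alpha> \<beta> y"
proof -
  note ab = ab_Y[OF adm]
  have a0: "\<alpha> 0 = 0" "\<beta> 0 = 1" using adm unfolding admissible_def by auto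
  have "proj x \<alpha> \<le> proj x \<beta>" using M ab start_less[of \<alpha> \<beta>] a0 unfolding Mono_def by auto
  then have dpos: "0 < proj x \<beta> - proj x \<alpha>" (is "0 < ?d") using ne by simp
  define r where "r = (1 + x) / 2"
  have r: "x < r" "r < 1" using x unfolding r_def by auto
  define L where "L = 2 / (1 - r)"
  have L: "0 < L" using r unfolding L_def by simp
  define e where "e = min ((1 - x) / 2) (?d / (4 * L))"
  have e: "0 < e" unfolding e_def using x dpos L by simp
  show ?thesis
  proof (intro exI[of _ e] conjI allI impI e)
    fix y assume dy: "dist y x < e" and y: "y \<in> {0<..<1::real}"
    have yr: "y \<le> r"
    proof -
      have "\<bar>y - x\<bar> < (1 - x) / 2" using dy unfolding e_def dist_real_def by simp
      moreover have "y - x \<le> \<bar>y - x\<bar>" by simp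
      ultimately show ?thesis unfolding r_def by (simp add: field_simps)
    qed
    have dyx: "\<bar>y - x\<bar> < e" using dy unfolding dist_real_def .
    have lip: "\<bar>proj y \<zeta> - proj x \<zeta>\<bar> \<le> L * \<bar>y - x\<bar>" if "\<zeta> \<in> Omega" for \<zeta>
      using proj_lip[OF that, of x y r] x y yr r unfolding L_def by auto
    have Le: "L * \<bar>y - x\<bar> \<le> ?d / 4"
    proof -
      have "L * \<bar>y - x\<bar> \<le> L * (?d / (4 * L))" using dyx L unfolding e_def
        by (intro mult_left_mono) auto
      then show ?thesis using L by simp
    qed
    show "Mono \<alpha> \<beta> y" unfolding Mono_def
    proof (intro ballI impI)
      fix \<omega> \<eta> assume w: "\<omega> \<in> Yset \<alpha> \<beta>" and eY: "\<eta> \<in> Yset \<alpha> \<beta>" and l: "lex_less \<omega> \<eta>"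
      have wo: "\<omega> \<in> Omega" and eo: "\<eta> \<in> Omega" using w eY Y_Omega by auto
      obtain n where n: "\<forall>k<n. \<omega> k = \<eta> k" "\<omega> n = 0" "\<eta> n = 1" using first_diff[OF wo eo l] by blast
      define w' where "w' = (shift ^^ n) \<omega>"
      define e' where "e' = (shift ^^ n) \<eta>"
      have w'o: "w' \<in> Omega" and e'o: "e' \<in> Omega" unfolding w'_def e'_def using Omega_shift wo eo by auto
      have g: "?d \<le> proj x e' - proj x w'" unfolding w'_def e'_def using inner_gap[OF adm M w eY n(2,3)] .
      have "0 \<le> proj y e' - proj y w'" using g lip[OF w'o] lip[OF e'o] Le dpos by (simp add: abs_le_iff)
      then have m: "0 \<le> y ^ n * (proj y e' - proj y w')" using y by simp
      have d: "proj y \<eta> - proj y \<omega> = y ^ n * (proj y e' - proj y w')"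
        unfolding w'_def e'_def using proj_diff[OF wo eo _ _ n(1), of y] y by simp
      show "proj y \<omega> \<le> proj y \<eta>" using m d by linarith
    qed
  qed
qed

lemma open_nonmono:
  assumes x: "0 < x" "x < 1" and M: "\<not> Mono \<alpha> \<beta> x"
  shows "\<exists>e>0. \<forall>y. dist y x < e \<longrightarrow> y \<in> {0<..<1} \<longrightarrow> \<not> Mono \<alpha> \<beta> y"
proof -
  obtain \<omega> \<eta> where w: "\<omega> \<in> Yset \<alpha> \<beta>" and eY: "\<eta> \<in> Yset \<alpha> \<beta>" and l: "lex_less \<omega> \<eta>"
    and gt: "proj x \<eta> < proj x \<omega>" using M unfolding Mono_def by auto
  have wo: "\<omega> \<in> Omega" and eo: "\<eta> \<in> Omega" using w eY Y_Omega by auto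
  define d where "d = proj x \<omega> - proj x \<eta>"
  have dpos: "0 < d" using gt unfolding d_def by simp
  define r where "r = (1 + x) / 2"
  have r: "x < r" "r < 1" using x unfolding r_def by auto
  define L where "L = 2 / (1 - r)"
  have L: "0 < L" using r unfolding L_def by simp
  define e where "e = min ((1 - x) / 2) (d / (4 * L))"
  have e: "0 < e" unfolding e_def using x dpos L by simp
  show ?thesis
  proof (intro exI[of _ e] conjI allI impI e)
    fix y assume dy: "dist y x < e" and y: "y \<in> {0<..<1::real}"
    have yr: "y \<le> r"
    proof -
      have "\<bar>y - x\<bar> < (1 - x) / 2" using dy unfolding e_def dist_real_def by simp
      moreover have "y - x \<le> \<bar>y - x\<bar>" by simp
      ultimately show ?thesis unfolding r_def by (simp add: field_simps)
    qed
    have dyx: "\<bar>y - x\<bar> < e" using dy unfolding dist_real_def .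
    have lip: "\<bar>proj y \<zeta> - proj x \<zeta>\<bar> \<le> L * \<bar>y - x\<bar>" if "\<zeta> \<in> Omega" for \<zeta>
      using proj_lip[OF that, of x y r] x y yr r unfolding L_def by auto
    have Le: "L * \<bar>y - x\<bar> \<le> d / 4"
    proof -
      have "L * \<bar>y - x\<bar> \<le> L * (d / (4 * L))" using dyx L unfolding e_def
        by (intro mult_left_mono) auto
      then show ?thesis using L by simp
    qed
    have "proj y \<eta> < proj y \<omega>" using lip[OF wo] lip[OF eo] Le dpos unfolding d_def by (simp add: abs_le_iff)
    then show "\<not> Mono \<alpha> \<beta> y" using w eY l unfolding Mono_def by force
  qed
qed

lemma all_mono:
  assumes adm: "admissible \<alpha> \<beta>" and ne: "\<forall>x. 0 < x \<and> x < 1 \<longrightarrow> proj x \<alpha> \<noteq> proj x \<beta>"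
  shows "\<forall>x. 0 < x \<and> x < 1 \<longrightarrow> Mono \<alpha> \<beta> x"
proof -
  define A where "A = {0<..<1::real}"
  define U where "U = {z. \<exists>e>0. \<forall>w. dist w z < e \<longrightarrow> w \<in> A \<longrightarrow> Mono \<alpha> \<beta> w}"
  define V where "V = {z. \<exists>e>0. \<forall>w. dist w z < e \<longrightarrow> w \<in> A \<longrightarrow> \<not> Mono \<alpha> \<beta> w}"
  have oU: "open U" unfolding open_dist
  proof
    fix z assume "z \<in> U"
    then obtain e where e: "e > 0" "\<forall>w. dist w z < e \<longrightarrow> w \<in> A \<longrightarrow> Mono \<alpha> \<beta> w" unfolding U_def by blast
    show "\<exists>e>0. \<forall>y. dist y z < e \<longrightarrow> y \<in> U"
    proof (intro exI[of _ e] conjI allI impI e(1))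
      fix y assume "dist y z < e"
      then have "\<forall>w. dist w y < e - dist y z \<longrightarrow> w \<in> A \<longrightarrow> Mono \<alpha> \<beta> w"
        using e(2) dist_triangle[of _ z y] by (smt (verit))
      then show "y \<in> U" unfolding U_def using \<open>dist y z < e\<close> by (intro CollectI exI[of _ "e - dist y z"]) auto
    qed
  qed
  have oV: "open V" unfolding open_dist
  proof
    fix z assume "z \<in> V"
    then obtain e where e: "e > 0" "\<forall>w. dist w z < e \<longrightarrow> w \<in> A \<longrightarrow> \<not> Mono \<alpha> \<beta> w" unfolding V_def by blast
    show "\<exists>e>0. \<forall>y. dist y z < e \<longrightarrow> y \<in> V"
    proof (intro exI[of _ e] conjI allI impI e(1))
      fix y assume "dist y z < e"
      then have "\<forall>w. dist w y < e - dist y z \<longrightarrow> w \<in> A \<longrightarrow> \<not> Mono \<alpha> \<beta> w"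
        using e(2) dist_triangle[of _ z y] by (smt (verit))
      then show "y \<in> V" unfolding V_def using \<open>dist y z < e\<close> by (intro CollectI exI[of _ "e - dist y z"]) auto
    qed
  qed
  have cA: "connected A" unfolding A_def by simp
  have disj: "U \<inter> V \<inter> A = {}"
  proof (rule ccontr)
    assume "U \<inter> V \<inter> A \<noteq> {}"
    then obtain z where z: "z \<in> U" "z \<in> V" "z \<in> A" by blast
    obtain e1 where "e1 > 0" "\<forall>w. dist w z < e1 \<longrightarrow> w \<in> A \<longrightarrow> Mono \<alpha> \<beta> w" using z(1) unfolding U_def by blast
    then have "Mono \<alpha> \<beta> z" using z(3) by auto
    obtain e2 where "e2 > 0" "\<forall>w. dist w z < e2 \<longrightarrow> w \<in> A \<longrightarrow> \<not> Mono \<alpha> \<beta> w" using z(2) unfolding V_def by blast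
    then have "\<not> Mono \<alpha> \<beta> z" using z(3) by auto
    with \<open>Mono \<alpha> \<beta> z\<close> show False by simp
  qed
  have cov: "A \<subseteq> U \<union> V"
  proof
    fix z assume z: "z \<in> A"
    then have z01: "0 < z" "z < 1" unfolding A_def by auto
    show "z \<in> U \<union> V"
    proof (cases "Mono \<alpha> \<beta> z")
      case True
      then show ?thesis using open_mono[OF adm z01 True] ne z01 unfolding U_def A_def by auto
    next
      case False
      then show ?thesis using open_nonmono[OF z01 False] unfolding V_def A_def by auto
    qed
  qed
  have "1/3 \<in> U"
    using open_mono[OF adm _ _ mono_third] ne unfolding U_def A_def by auto
  then have "U \<inter> A \<noteq> {}" unfolding A_def by auto
  then have VA: "V \<inter> A = {}" using connectedD[OF cA oU oV disj cov] by blast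
  show ?thesis
  proof (intro allI impI)
    fix x :: real assume x: "0 < x \<and> x < 1"
    then have "x \<in> A" unfolding A_def by auto
    then have "x \<in> U" using cov VA by blast
    then obtain e where "e > 0" "\<forall>w. dist w x < e \<longrightarrow> w \<in> A \<longrightarrow> Mono \<alpha> \<beta> w" unfolding U_def by blast
    then show "Mono \<alpha> \<beta> x" using x unfolding A_def by auto
  qed
qed



lemma floor_sep:
  assumes "0 \<le> a" "0 \<le> b" "0 < e" "e \<le> \<bar>b - a\<bar>"
  shows "nat \<lfloor>a / e\<rfloor> \<noteq> nat \<lfloor>b / e\<rfloor>"
proof -
  have *: "nat \<lfloor>u / e\<rfloor> \<noteq> nat \<lfloor>v / e\<rfloor>" if "0 \<le> u" "u + e \<le> v" for u v
  proof -
    have "(u + e) / e \<le> v / e" using that assms(3) by (intro divide_right_mono) auto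
    then have "u / e + 1 \<le> v / e" using assms(3) by (simp add: add_divide_distrib)
    then have "\<lfloor>u / e + 1\<rfloor> \<le> \<lfloor>v / e\<rfloor>" by (rule floor_mono)
    then have "\<lfloor>u / e\<rfloor> + 1 \<le> \<lfloor>v / e\<rfloor>" by simp
    moreover have "0 \<le> \<lfloor>u / e\<rfloor>" using that assms(3) by simp
    ultimately show ?thesis by linarith
  qed
  show ?thesis
  proof (cases "a \<le> b")
    case True then show ?thesis using *[of a b] assms by simp
  next
    case False then show ?thesis using *[of b a] assms by simp
  qed
qed

lemma sep:
  assumes adm: "admissible \<alpha> \<beta>" and M: "Mono \<alpha> \<beta> x" and x: "0 < x" "x < 1"
    and \<omega>: "\<omega> \<in> Yset \<alpha> \<beta>" and \<eta>: "\<eta> \<in> Yset \<alpha> \<beta>" and k: "k \<le> n" "\<omega> k \<noteq> \<eta> k"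
    and dpos: "0 \<le> proj x \<beta> - proj x \<alpha>"
  shows "x ^ n * (proj x \<beta> - proj x \<alpha>) \<le> \<bar>proj x \<eta> - proj x \<omega>\<bar>"
proof -
  have *: "x ^ n * (proj x \<beta> - proj x \<alpha>) \<le> proj x b - proj x a"
    if a: "a \<in> Yset \<alpha> \<beta>" and b: "b \<in> Yset \<alpha> \<beta>" and l: "lex_less a b" and kk: "a k \<noteq> b k" for a b
  proof -
    have ao: "a \<in> Omega" and bo: "b \<in> Omega" using a b Y_Omega by auto
    obtain m where m: "\<forall>j<m. a j = b j" "a m = 0" "b m = 1" using first_diff[OF ao bo l] by blast
    have "m \<le> k" using m(1) kk by (meson not_le)
    then have mn: "m \<le> n" using k by simp
    have "x ^ n \<le> x ^ m" using x mn by (intro power_decreasing) auto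
    then have "x ^ n * (proj x \<beta> - proj x \<alpha>) \<le> x ^ m * (proj x \<beta> - proj x \<alpha>)"
      using dpos by (intro mult_right_mono) auto
    also have "\<dots> \<le> proj x b - proj x a"
      using gap[OF adm M _ _ a b m] x by simp
    finally show ?thesis .
  qed
  have "\<omega> \<noteq> \<eta>" using k by auto
  then consider "lex_less \<omega> \<eta>" | "lex_less \<eta> \<omega>" using lex_total by blast
  then show ?thesis
  proof cases
    case 1 then show ?thesis using *[OF \<omega> \<eta> 1 k(2)] by simp
  next
    case 2 then show ?thesis using *[OF \<eta> \<omega> 2] k(2) by simp
  qed
qed

lemma card_bound:
  assumes adm: "admissible \<alpha> \<beta>" and M: "Mono \<alpha> \<beta> x" and x: "0 < x" "x < 1"
    and dpos: "0 < proj x \<beta> - proj x \<alpha>"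
  shows "finite (prefixes (Yset \<alpha> \<beta>) n) \<and>
         real (card (prefixes (Yset \<alpha> \<beta>) n)) \<le> 1 + 1 / (x ^ n * (proj x \<beta> - proj x \<alpha>))"
proof -
  define Y where "Y = Yset \<alpha> \<beta>"
  define e where "e = x ^ n * (proj x \<beta> - proj x \<alpha>)"
  have e: "0 < e" unfolding e_def using x dpos by simp
  define rep where "rep w = (SOME \<omega>. \<omega> \<in> Y \<and> map \<omega> [0..<Suc n] = w)" for w
  have rep: "rep w \<in> Y \<and> map (rep w) [0..<Suc n] = w" if "w \<in> prefixes Y n" for w
  proof -
    have "\<exists>\<omega>. \<omega> \<in> Y \<and> map \<omega> [0..<Suc n] = w" using that unfolding prefixes_def by auto
    then show ?thesis unfolding rep_def by (rule someI_ex)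
  qed
  define g where "g w = nat \<lfloor>proj x (rep w) / e\<rfloor>" for w
  have inj: "inj_on g (prefixes Y n)"
  proof (rule inj_onI)
    fix w1 w2 assume w1: "w1 \<in> prefixes Y n" and w2: "w2 \<in> prefixes Y n" and eq: "g w1 = g w2"
    show "w1 = w2"
    proof (rule ccontr)
      assume ne: "w1 \<noteq> w2"
      have r1: "rep w1 \<in> Y" "map (rep w1) [0..<Suc n] = w1" using rep[OF w1] by auto
      have r2: "rep w2 \<in> Y" "map (rep w2) [0..<Suc n] = w2" using rep[OF w2] by auto
      obtain k where k: "k \<le> n" "rep w1 k \<noteq> rep w2 k"
      proof -
        have "map (rep w1) [0..<Suc n] \<noteq> map (rep w2) [0..<Suc n]" using r1 r2 ne by simp
        then have "\<exists>k\<in>set [0..<Suc n]. rep w1 k \<noteq> rep w2 k" by (meson map_eq_conv)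
        then obtain k where "k \<in> set [0..<Suc n]" "rep w1 k \<noteq> rep w2 k" by blast
        moreover then have "k \<le> n" by (simp only: set_upt atLeastLessThan_iff less_Suc_eq_le)
        ultimately show ?thesis using that[of k] by blast
      qed
      have s: "e \<le> \<bar>proj x (rep w2) - proj x (rep w1)\<bar>"
        unfolding e_def using sep[OF adm M x r1(1)[unfolded Y_def] r2(1)[unfolded Y_def] k] dpos by simp
      have "g w1 \<noteq> g w2" unfolding g_def
        using floor_sep[OF _ _ e s] proj_bounds(1) r1 r2 Y_Omega x unfolding Y_def by auto
      then show False using eq by simp
    qed
  qed
  have img: "g ` prefixes Y n \<subseteq> {0..nat \<lfloor>1 / e\<rfloor>}"
  proof
    fix z assume "z \<in> g ` prefixes Y n"
    then obtain w where w: "w \<in> prefixes Y n" "z = g w" by blast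
    have o: "rep w \<in> Omega" using rep[OF w(1)] Y_Omega unfolding Y_def by auto
    have "proj x (rep w) \<le> 1" using proj_bounds(2)[OF o] x by simp
    then have "proj x (rep w) / e \<le> 1 / e" using e by (simp add: divide_right_mono)
    then have "\<lfloor>proj x (rep w) / e\<rfloor> \<le> \<lfloor>1 / e\<rfloor>" by (rule floor_mono)
    then show "z \<in> {0..nat \<lfloor>1 / e\<rfloor>}" unfolding w(2) g_def by auto
  qed
  have fin: "finite (prefixes Y n)" using inj_on_finite[OF inj img] by simp
  have "card (prefixes Y n) \<le> card {0..nat \<lfloor>1 / e\<rfloor>}" using card_inj_on_le[OF inj img] by simp
  then have "card (prefixes Y n) \<le> nat \<lfloor>1 / e\<rfloor> + 1" by simp
  then have "real (card (prefixes Y n)) \<le> real (nat \<lfloor>1 / e\<rfloor>) + 1" by linarith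
  also have "real (nat \<lfloor>1 / e\<rfloor>) \<le> 1 / e" using e by (simp add: of_nat_nat)
  finally show ?thesis using fin unfolding Y_def e_def by simp
qed



lemma entropy_le:
  assumes adm: "admissible \<alpha> \<beta>" and M: "Mono \<alpha> \<beta> x" and x: "0 < x" "x < 1"
    and dpos: "0 < proj x \<beta> - proj x \<alpha>"
  shows "entropy (Omega_ab \<alpha> \<beta>) \<le> ereal (- ln x)"
proof -
  define \<delta> where "\<delta> = proj x \<beta> - proj x \<alpha>"
  have \<delta>: "0 < \<delta>" using dpos unfolding \<delta>_def .
  define C where "C = 1 + 1 / \<delta>"
  have C: "1 \<le> C" using \<delta> unfolding C_def by simp
  have lx: "0 < - ln x" using x by simp
  have bnd: "ln (real (card (prefixes (Omega_ab \<alpha> \<beta>) n))) / real n \<le> ln C / real n + - ln x"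
    if n: "n \<ge> 1" for n
  proof -
    have cb: "finite (prefixes (Yset \<alpha> \<beta>) n)"
      "real (card (prefixes (Yset \<alpha> \<beta>) n)) \<le> 1 + 1 / (x ^ n * \<delta>)"
      using card_bound[OF adm M x dpos, of n] unfolding \<delta>_def by auto
    have sub: "prefixes (Omega_ab \<alpha> \<beta>) n \<subseteq> prefixes (Yset \<alpha> \<beta>) n"
      unfolding prefixes_def using ab_Y(3)[OF adm] by (rule image_mono)
    have "card (prefixes (Omega_ab \<alpha> \<beta>) n) \<le> card (prefixes (Yset \<alpha> \<beta>) n)"
      using card_mono[OF cb(1) sub] .
    then have c1: "real (card (prefixes (Omega_ab \<alpha> \<beta>) n)) \<le> 1 + 1 / (x ^ n * \<delta>)"
      using cb(2) by linarith
    have xn: "0 < x ^ n" "x ^ n \<le> 1" using x by (auto intro: power_le_one)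
    have "1 + 1 / (x ^ n * \<delta>) \<le> C / x ^ n"
    proof -
      have "1 \<le> 1 / x ^ n" using xn by simp
      moreover have "1 / (x ^ n * \<delta>) = (1 / \<delta>) / x ^ n" by simp
      ultimately have "1 + 1 / (x ^ n * \<delta>) \<le> 1 / x ^ n + (1 / \<delta>) / x ^ n" by linarith
      also have "\<dots> = C / x ^ n" unfolding C_def by (simp add: add_divide_distrib)
      finally show ?thesis .
    qed
    with c1 have c2: "real (card (prefixes (Omega_ab \<alpha> \<beta>) n)) \<le> C / x ^ n" by linarith
    have lnC: "ln (C / x ^ n) = ln C + real n * (- ln x)"
      using C xn x by (simp add: ln_div ln_realpow)
    have "ln (real (card (prefixes (Omega_ab \<alpha> \<beta>) n))) \<le> ln C + real n * (- ln x)"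
    proof (cases "card (prefixes (Omega_ab \<alpha> \<beta>) n) = 0")
      case True
      have "0 \<le> ln C" using C by simp
      moreover have "0 \<le> real n * (- ln x)" using lx by (intro mult_nonneg_nonneg) auto
      ultimately show ?thesis using True by simp
    next
      case False
      then have "0 < real (card (prefixes (Omega_ab \<alpha> \<beta>) n))" by simp
      then have "ln (real (card (prefixes (Omega_ab \<alpha> \<beta>) n))) \<le> ln (C / x ^ n)"
        using c2 by (subst ln_le_cancel_iff) (use C xn in auto)
      then show ?thesis using lnC by simp
    qed
    then have "ln (real (card (prefixes (Omega_ab \<alpha> \<beta>) n))) / real n \<le> (ln C + real n * (- ln x)) / real n"
      using n by (intro divide_right_mono) auto
    also have "\<dots> = ln C / real n + - ln x"
    proof -
      have "real n \<noteq> 0" using n by simp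
      then show ?thesis by (simp add: field_simps)
    qed
    finally show ?thesis .
  qed
  have ev: "eventually (\<lambda>n. ereal (ln (real (card (prefixes (Omega_ab \<alpha> \<beta>) n))) / real n)
               \<le> ereal (ln C / real n + - ln x)) sequentially"
    using bnd by (intro eventually_sequentiallyI[of 1]) auto
  have lim: "(\<lambda>n. ereal (ln C / real n + - ln x)) \<longlonglongrightarrow> ereal (- ln x)"
  proof -
    have "(\<lambda>n. ln C / real n + - ln x) \<longlonglongrightarrow> 0 + - ln x"
      by (intro tendsto_add lim_const_over_n tendsto_const)
    then show ?thesis by (intro tendsto_ereal) simp
  qed
  have "entropy (Omega_ab \<alpha> \<beta>) \<le> limsup (\<lambda>n. ereal (ln C / real n + - ln x))"
    unfolding entropy_def using Limsup_mono[OF ev] .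
  also have "\<dots> = ereal (- ln x)" by (rule lim_imp_Limsup[OF trivial_limit_sequentially lim])
  finally show ?thesis .
qed


theorem theorem3:
  fixes \<alpha> \<beta> :: "nat \<Rightarrow> nat"
  assumes "admissible \<alpha> \<beta>" and "non_null \<alpha> \<beta>"
  shows "\<exists>x. 0 < x \<and> x < 1 \<and> proj x \<alpha> = proj x \<beta>"
proof (rule ccontr)
  assume "\<not> ?thesis"
  then have ne: "\<forall>x. 0 < x \<and> x < 1 \<longrightarrow> proj x \<alpha> \<noteq> proj x \<beta>" by blast
  have M: "\<forall>x. 0 < x \<and> x < 1 \<longrightarrow> Mono \<alpha> \<beta> x" using all_mono[OF assms(1) ne] .
  have a0: "\<alpha> 0 = 0" "\<beta> 0 = 1" using assms(1) unfolding admissible_def by auto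
  have bound: "entropy (Omega_ab \<alpha> \<beta>) \<le> ereal (- ln x)" if x: "0 < x" "x < 1" for x
  proof -
    have Mx: "Mono \<alpha> \<beta> x" using M x by blast
    have "proj x \<alpha> \<le> proj x \<beta>" using Mx ab_Y[OF assms(1)] start_less[of \<alpha> \<beta>] a0 unfolding Mono_def by auto
    then have "0 < proj x \<beta> - proj x \<alpha>" using ne x by force
    then show ?thesis using entropy_le[OF assms(1) Mx x] by blast
  qed
  have pos: "0 < entropy (Omega_ab \<alpha> \<beta>)" using assms(2) unfolding non_null_def .
  show False
  proof (cases "entropy (Omega_ab \<alpha> \<beta>)")
    case (real h)
    then have h: "0 < h" using pos by simp
    define x where "x = exp (- h / 2)"
    have x: "0 < x" "x < 1" unfolding x_def using h by auto
    have "- ln x = h / 2" unfolding x_def by simp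
    then have "ereal h \<le> ereal (h / 2)" using bound[OF x] real by simp
    then show False using h by simp
  next
    case PInf
    then show False using bound[of "1/2"] by simp
  next
    case MInf
    then show False using pos by simp
  qed
qed

end
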